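(* Assume the setting in the context, and assume there is $\bar\nu>0$ with $n\nu_{ni}\le\bar\nu$ for all $i$ and all $n$. Then \[ \sigma_n^2\le\frac{\bar\nu^2}{n^2}\sum_{i=1}^n|N_i|\,\|\tilde y_i\|_p^2\,\|\psi_i\|_q^2 \] for any $p,q\in[1,\infty]$ with $1/p+1/q=1/2$ (trivially if some $\|\tilde y_i\|_p$ or $\|\psi_i\|_q$ is infinite). Furthermore, with $S_2=\{(p,q)\in[1,\infty]^2:1/p+1/q=1/2\}$, \[ \sigma_n^2\le\frac{\bar\nu^2d_n}{n}\Bigl(\inf_{(p,q)\in S_2}\|\tilde y\|_{\max,p}^n\,\|\psi\|_{\max,q}^n\Bigr)^2 \] (trivially if the infimum is infinite).
   Context: Let $(\Omega,\mathcal F,P)$ be a probability space (latent environment) and $\mathcal Z$ a measurable space of treatment assignments with a known randomisation probability measure $\mu$. For units $i=1,\dots,n$, the potential outcome is a measurable map $\tilde y_i:\mathcal Z\times\Omega\to\mathbb R$ of the form $\tilde y_i(z,\omega)=y_i(z,x_i(\omega),\epsilon_i(\omega))$ with $y_i,x_i,\epsilon_i$ measurable. For $p\ge1$, $\|u\|_p=(\int|u(z,\omega)|^p\mu(\mathrm dz)P(\mathrm d\omega))^{1/p}$; $\mathbb E,\mathbb V$ are taken with respect to $\mu(\mathrm dz)P(\mathrm d\omega)$. Each $\tilde y_i$ lies in a model space $\mathcal M_i\subset L^2(\mathcal Z\times\Omega)$ (taken closed) with inner product $\langle u,v\rangle=\mathbb E[uv]$. The treatment effect $\theta_i$ is a continuous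 linear functional on $\mathcal M_i$ with Riesz representer $\psi_i\in\mathcal M_i$, i.e. $\theta_i(u)=\langle u,\psi_i\rangle$ for all $u\in\mathcal M_i$. The Riesz estimator is $\hat\theta_i=\tilde y_i\psi_i$; given weights $\nu_{ni}\ge0$, $\hat\tau_n(z,\omega)=\sum_{i=1}^n\nu_{ni}\hat\theta_i(z,\omega)$ and $\sigma_n^2=\mathbb V[\hat\tau_n(z,\omega)]$. Dependency neighbourhoods: for each $i$, $N_i$ is the intersection of all subsets $M\subset\{1,\dots,n\}$ such that $(\tilde y_i,\psi_i)$ is independent of $\{(\tilde y_j,\psi_j):j\notin M\}$; $d_n=n^{-1}\sum_{i=1}^n|N_i|$. Max-$p$ norms: $\|\tilde y\|_{\max,p}^n=\max_{1\le i\le n}\|\tilde y_i\|_p$ and $\|\psi\|_{\max,q}^n=\max_{1\le i\le n}\|\psi_i\|_q$. *)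

theory Defs
  imports "HOL-Probability.Probability"
begin

definition Lp_norm :: "'a measure \<Rightarrow> ennreal \<Rightarrow> ('a \<Rightarrow> real) \<Rightarrow> ennreal" where
  "Lp_norm M p u =
     (if p = \<infinity> then esssup M (\<lambda>x. ennreal \<bar>u x\<bar>)
      else (let I = (\<integral>\<^sup>+ x. ennreal (\<bar>u x\<bar> powr enn2real p) \<partial>M)
            in if I = \<infinity> then \<infinity> else ennreal (enn2real I powr (1 / enn2real p))))"

definition L2_funs :: "'a measure \<Rightarrow> ('a \<Rightarrow> real) set" where
  "L2_funs M = {u. u \<in> borel_measurable M \<and> integrable M (\<lambda>x. (u x)\<^sup>2)}"

definition closed_L2_subspace :: "'a measure \<Rightarrow> ('a \<Rightarrow> real) set \<Rightarrow> bool" where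
  "closed_L2_subspace M V \<longleftrightarrow>
     V \<subseteq> L2_funs M \<and> (\<lambda>x. 0) \<in> V \<and>
     (\<forall>u\<in>V. \<forall>v\<in>V. \<forall>c::real. (\<lambda>x. u x + c * v x) \<in> V) \<and>
     (\<forall>f u. (\<forall>k. f k \<in> V) \<and> u \<in> L2_funs M \<and>
            ((\<lambda>k. \<integral>\<^sup>+ x. ennreal ((f k x - u x)\<^sup>2) \<partial>M) \<longlonglongrightarrow> 0) \<longrightarrow> u \<in> V)"

text \<open>Dependency neighbourhood N_i: intersection of all S \<subseteq> {1..n} such that
  (y_i, psi_i) is independent of the family ((y_j, psi_j))_{j \<in> {1..n} - S}.\<close>
definition dep_nbhd :: "'a measure \<Rightarrow> (nat \<Rightarrow> 'a \<Rightarrow> real) \<Rightarrow> (nat \<Rightarrow> 'a \<Rightarrow> real)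
                        \<Rightarrow> nat \<Rightarrow> nat \<Rightarrow> nat set" where
  "dep_nbhd M y \<psi> n i =
     \<Inter> {S. S \<subseteq> {1..n} \<and>
            prob_space.indep_set M
              (sigma_sets (space M)
                 {(\<lambda>x. (y i x, \<psi> i x)) -` B \<inter> space M | B. B \<in> sets (borel :: (real \<times> real) measure)})
              (sigma_sets (space M)
                 (\<Union>j\<in>{1..n} - S.
                    {(\<lambda>x. (y j x, \<psi> j x)) -` B \<inter> space M | B. B \<in> sets (borel :: (real \<times> real) measure)}))}"

end

theory Submission
  imports Defs
begin

lemma indep_from_nbhd:
  fixes M :: "'a measure"
  assumes P: "prob_space M" and ij: "i \<in> {1..n}" "j \<in> {1..n}"
    and nj: "j \<notin> dep_nbhd M y \<psi> n i"
    and meas: "\<And>k. k \<ge> 1 \<Longrightarrow> y k \<in> borel_measurable M" "\<And>k. k \<ge> 1 \<Longrightarrow> \<psi> k \<in> borel_measurable M"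
  shows "prob_space.indep_var M borel (\<lambda>x. y i x * \<psi> i x) borel (\<lambda>x. y j x * \<psi> j x)"
proof -
  interpret prob_space M by fact
  define G where "G k = {(\<lambda>x. (y k x, \<psi> k x)) -` B \<inter> space M | B. B \<in> sets (borel :: (real \<times> real) measure)}" for k
  from nj obtain S where S: "S \<subseteq> {1..n}" "indep_set (sigma_sets (space M) (G i))
      (sigma_sets (space M) (\<Union>k\<in>{1..n} - S. G k))" "j \<notin> S"
    unfolding dep_nbhd_def G_def by blast
  have sub: "sigma_sets (space M) (G j) \<subseteq> sigma_sets (space M) (\<Union>k\<in>{1..n} - S. G k)"
    apply (rule sigma_sets_mono') using S ij by auto
  have "indep_set (sigma_sets (space M) (G i)) (sigma_sets (space M) (G j))"
    using S(2) sub unfolding indep_sets2_eq by blast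
  moreover have rv: "random_variable borel (\<lambda>x. (y k x, \<psi> k x))" if "k \<ge> 1" for k
    using meas[OF that] by measurable
  ultimately have ind: "indep_var borel (\<lambda>x. (y i x, \<psi> i x)) borel (\<lambda>x. (y j x, \<psi> j x))"
    unfolding indep_var_eq G_def using ij by auto
  have m: "(\<lambda>(a,b). a*b :: real) \<in> borel_measurable borel"
    unfolding case_prod_beta by (rule borel_measurable_continuous_onI) (intro continuous_intros)
  have "indep_var borel ((\<lambda>(a,b). a*b) \<circ> (\<lambda>x. (y i x, \<psi> i x))) borel ((\<lambda>(a,b). a*b) \<circ> (\<lambda>x. (y j x, \<psi> j x)))"
    by (rule indep_var_compose[OF ind m m])
  then show ?thesis by (simp add: o_def)
qed

lemma nbhd_sub:
  fixes M :: "'a measure"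
  assumes P: "prob_space M" and i: "i \<ge> 1"
    and meas: "y i \<in> borel_measurable M" "\<psi> i \<in> borel_measurable M"
  shows "dep_nbhd M y \<psi> n i \<subseteq> {1..n}"
proof -
  interpret prob_space M by fact
  define G where "G k = {(\<lambda>x. (y k x, \<psi> k x)) -` B \<inter> space M | B. B \<in> sets (borel :: (real \<times> real) measure)}" for k
  have rv: "random_variable borel (\<lambda>x. (y i x, \<psi> i x))"
    using meas by measurable
  have Gi: "G i \<subseteq> events" unfolding G_def using rv by (auto intro: measurable_sets)
  have "indep_set (sigma_sets (space M) (G i)) (sigma_sets (space M) (\<Union>k\<in>{1..n} - {1..n}. G k))"
    unfolding indep_sets2_eq
  proof (intro conjI ballI)
    show "sigma_sets (space M) (G i) \<subseteq> events" using Gi by (rule sets.sigma_sets_subset)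
    show "sigma_sets (space M) (\<Union>k\<in>{1..n} - {1..n}. G k) \<subseteq> events"
      by (simp add: sigma_sets_empty_eq)
    fix a b assume a: "a \<in> sigma_sets (space M) (G i)" and b: "b \<in> sigma_sets (space M) (\<Union>k\<in>{1..n} - {1..n}. G k)"
    have "a \<in> events" using a Gi sets.sigma_sets_subset by blast
    then have "a \<subseteq> space M" by (rule sets.sets_into_space)
    moreover have "b = {} \<or> b = space M" using b by (simp add: sigma_sets_empty_eq)
    ultimately show "prob (a \<inter> b) = prob a * prob b" by (auto simp: Int_absorb2 prob_space)
  qed
  then have "{1..n} \<in> {S. S \<subseteq> {1..n} \<and> indep_set (sigma_sets (space M) (G i))
              (sigma_sets (space M) (\<Union>j\<in>{1..n} - S. G j))}" by simp
  then show ?thesis unfolding dep_nbhd_def G_def[symmetric] by blast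
qed

lemma two_mult_le_sq: "2 * (a * b) \<le> (a::real) * a + b * b"
proof -
  have "0 \<le> (a - b) * (a - b)" by simp
  then show ?thesis by (simp add: algebra_simps)
qed

lemma abs_mult_le_sq: "\<bar>a * b\<bar> \<le> (a::real)\<^sup>2 + b\<^sup>2"
proof -
  have "2 * (\<bar>a\<bar> * \<bar>b\<bar>) \<le> \<bar>a\<bar> * \<bar>a\<bar> + \<bar>b\<bar> * \<bar>b\<bar>" by (rule two_mult_le_sq)
  moreover have "\<bar>a\<bar> * \<bar>a\<bar> = a\<^sup>2" "\<bar>b\<bar> * \<bar>b\<bar> = b\<^sup>2"
    by (simp_all add: power2_eq_square abs_mult_self_eq)
  moreover have "0 \<le> \<bar>a\<bar> * \<bar>b\<bar>" by simp
  ultimately show ?thesis unfolding abs_mult by linarith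
qed

lemma two_mult_le_sq': "- (2 * (a * b)) \<le> (a::real) * a + b * b"
  using two_mult_le_sq[of a "-b"] by simp

lemma (in prob_space) core_bound:
  fixes \<theta> :: "nat \<Rightarrow> 'a \<Rightarrow> real" and I :: "nat set"
  assumes fin: "finite I"
    and meas: "\<And>i. i \<in> I \<Longrightarrow> \<theta> i \<in> borel_measurable M"
    and L2: "\<And>i. i \<in> I \<Longrightarrow> integrable M (\<lambda>x. (\<theta> i x)\<^sup>2)"
    and L1: "\<And>i. i \<in> I \<Longrightarrow> integrable M (\<theta> i)"
    and ind: "\<And>i j. i \<in> I \<Longrightarrow> j \<in> I \<Longrightarrow> j \<notin> N i \<Longrightarrow>
               expectation (\<lambda>x. \<theta> i x * \<theta> j x) = expectation (\<theta> i) * expectation (\<theta> j)"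
    and NI: "\<And>i. i \<in> I \<Longrightarrow> N i \<subseteq> I"
    and w: "\<And>i. i \<in> I \<Longrightarrow> 0 \<le> w i \<and> w i \<le> W"
  shows "variance (\<lambda>x. \<Sum>i\<in>I. w i * \<theta> i x)
         \<le> W\<^sup>2 * (\<Sum>i\<in>I. real (card (N i)) * expectation (\<lambda>x. (\<theta> i x)\<^sup>2))"
proof -
  define \<mu> where "\<mu> i = expectation (\<theta> i)" for i
  define D where "D i x = \<theta> i x - \<mu> i" for i x
  define b where "b i = expectation (\<lambda>x. (\<theta> i x)\<^sup>2)" for i
  define c where "c i j = expectation (\<lambda>x. D i x * D j x)" for i j
  define e where "e i j = (if j \<in> N i \<and> i \<in> N j then 1 else 0::real)" for i j
  have prodint: "integrable M (\<lambda>x. \<theta> i x * \<theta> j x)" if "i \<in> I" "j \<in> I" for i j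
  proof (rule Bochner_Integration.integrable_bound)
    show "integrable M (\<lambda>x. (\<theta> i x)\<^sup>2 + (\<theta> j x)\<^sup>2)" using L2 that by auto
    show "(\<lambda>x. \<theta> i x * \<theta> j x) \<in> borel_measurable M" using meas that by auto
    show "AE x in M. norm (\<theta> i x * \<theta> j x) \<le> norm ((\<theta> i x)\<^sup>2 + (\<theta> j x)\<^sup>2)"
      by (intro AE_I2) (simp add: abs_mult_le_sq)
  qed
  have Dexp: "(\<lambda>x. D i x * D j x) = (\<lambda>x. \<theta> i x * \<theta> j x - \<mu> j * \<theta> i x - \<mu> i * \<theta> j x + \<mu> i * \<mu> j)" for i j
    by (auto simp: D_def algebra_simps)
  have Dint: "integrable M (\<lambda>x. D i x * D j x)" if "i \<in> I" "j \<in> I" for i j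
    unfolding Dexp using prodint[OF that] L1 that by auto
  have cval: "c i j = expectation (\<lambda>x. \<theta> i x * \<theta> j x) - \<mu> i * \<mu> j" if "i \<in> I" "j \<in> I" for i j
    unfolding c_def Dexp using prodint[OF that] L1 that
    by (simp add: \<mu>_def prob_space)
  have csym: "c i j = c j i" for i j unfolding c_def by (simp add: mult.commute)
  have c0: "c i j = 0" if "i \<in> I" "j \<in> I" "j \<notin> N i" for i j
    using cval[OF that(1,2)] ind[OF that] by (simp add: \<mu>_def)
  have cii: "c i i \<le> b i" if "i \<in> I" for i
    using cval[OF that that] by (simp add: b_def power2_eq_square)
  have cle: "\<bar>c i j\<bar> \<le> (c i i + c j j) / 2" if "i \<in> I" "j \<in> I" for i j
  proof -
    have "2 * c i j \<le> c i i + c j j"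
    proof -
      have "2 * c i j = expectation (\<lambda>x. 2 * (D i x * D j x))" by (simp add: c_def)
      also have "\<dots> \<le> expectation (\<lambda>x. D i x * D i x + D j x * D j x)"
        using Dint that by (intro integral_mono) (auto intro: two_mult_le_sq)
      also have "\<dots> = c i i + c j j" using Dint that by (simp add: c_def)
      finally show ?thesis .
    qed
    moreover have "- 2 * c i j \<le> c i i + c j j"
    proof -
      have "- 2 * c i j = expectation (\<lambda>x. - (2 * (D i x * D j x)))" by (simp add: c_def)
      also have "\<dots> \<le> expectation (\<lambda>x. D i x * D i x + D j x * D j x)"
        using Dint that by (intro integral_mono) (auto intro: two_mult_le_sq')
      also have "\<dots> = c i i + c j j" using Dint that by (simp add: c_def)
      finally show ?thesis .
    qed
    ultimately show ?thesis by (simp add: abs_le_iff)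
  qed
  have var_eq: "variance (\<lambda>x. \<Sum>i\<in>I. w i * \<theta> i x) = (\<Sum>i\<in>I. \<Sum>j\<in>I. w i * w j * c i j)"
  proof -
    have E: "expectation (\<lambda>x. \<Sum>i\<in>I. w i * \<theta> i x) = (\<Sum>i\<in>I. w i * \<mu> i)"
      using L1 by (simp add: \<mu>_def)
    have "(\<lambda>x. ((\<Sum>i\<in>I. w i * \<theta> i x) - (\<Sum>i\<in>I. w i * \<mu> i))\<^sup>2)
        = (\<lambda>x. \<Sum>i\<in>I. \<Sum>j\<in>I. w i * w j * (D i x * D j x))"
    proof
      fix x
      have "(\<Sum>i\<in>I. w i * \<theta> i x) - (\<Sum>i\<in>I. w i * \<mu> i) = (\<Sum>i\<in>I. w i * D i x)"
        by (simp add: D_def right_diff_distrib sum_subtractf)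
      then show "((\<Sum>i\<in>I. w i * \<theta> i x) - (\<Sum>i\<in>I. w i * \<mu> i))\<^sup>2
          = (\<Sum>i\<in>I. \<Sum>j\<in>I. w i * w j * (D i x * D j x))"
        by (simp add: power2_eq_square sum_product mult_ac)
    qed
    then have "variance (\<lambda>x. \<Sum>i\<in>I. w i * \<theta> i x)
        = expectation (\<lambda>x. \<Sum>i\<in>I. \<Sum>j\<in>I. w i * w j * (D i x * D j x))"
      by (simp add: E)
    also have "\<dots> = (\<Sum>i\<in>I. \<Sum>j\<in>I. w i * w j * c i j)"
      using Dint by (simp add: c_def)
    finally show ?thesis .
  qed
  have trm: "w i * w j * c i j \<le> W\<^sup>2 * (e i j * ((b i + b j) / 2))" if "i \<in> I" "j \<in> I" for i j
  proof (cases "j \<in> N i \<and> i \<in> N j")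
    case True
    have "w i * w j * c i j \<le> w i * w j * \<bar>c i j\<bar>"
      using w[OF that(1)] w[OF that(2)] by (intro mult_left_mono) auto
    also have "\<dots> \<le> W\<^sup>2 * ((b i + b j) / 2)"
    proof (rule mult_mono)
      show "w i * w j \<le> W\<^sup>2"
        using w[OF that(1)] w[OF that(2)] by (simp add: power2_eq_square mult_mono)
      show "\<bar>c i j\<bar> \<le> (b i + b j) / 2" using cle[OF that] cii[OF that(1)] cii[OF that(2)] by argo
    qed auto
    finally show ?thesis using True by (simp add: e_def)
  next
    case False
    then have "c i j = 0" using c0 that csym by metis
    then show ?thesis using False by (auto simp: e_def)
  qed
  have esym: "e i j = e j i" for i j by (auto simp: e_def)
  have b0: "0 \<le> b i" for i unfolding b_def by simp
  have "(\<Sum>i\<in>I. \<Sum>j\<in>I. e i j * ((b i + b j) / 2)) = (\<Sum>i\<in>I. \<Sum>j\<in>I. e i j * b i)"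
  proof -
    have "(\<Sum>i\<in>I. \<Sum>j\<in>I. e i j * b j) = (\<Sum>j\<in>I. \<Sum>i\<in>I. e i j * b j)" by (rule sum.swap)
    also have "\<dots> = (\<Sum>i\<in>I. \<Sum>j\<in>I. e i j * b i)" by (simp add: esym)
    finally have *: "(\<Sum>i\<in>I. \<Sum>j\<in>I. e i j * b j) = (\<Sum>i\<in>I. \<Sum>j\<in>I. e i j * b i)" .
    have pw: "e i j * ((b i + b j) / 2) = e i j * b i / 2 + e i j * b j / 2" for i j
      by (simp add: field_simps)
    have "(\<Sum>i\<in>I. \<Sum>j\<in>I. e i j * ((b i + b j) / 2))
        = (\<Sum>i\<in>I. \<Sum>j\<in>I. e i j * b i / 2) + (\<Sum>i\<in>I. \<Sum>j\<in>I. e i j * b j / 2)"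
      by (simp only: pw sum.distrib)
    also have "\<dots> = (\<Sum>i\<in>I. \<Sum>j\<in>I. e i j * b i) / 2 + (\<Sum>i\<in>I. \<Sum>j\<in>I. e i j * b j) / 2"
      by (simp only: sum_divide_distrib)
    finally have "(\<Sum>i\<in>I. \<Sum>j\<in>I. e i j * ((b i + b j) / 2))
        = (\<Sum>i\<in>I. \<Sum>j\<in>I. e i j * b i) / 2 + (\<Sum>i\<in>I. \<Sum>j\<in>I. e i j * b j) / 2" .
    then show ?thesis using * by simp
  qed
  also have "\<dots> \<le> (\<Sum>i\<in>I. real (card (N i)) * b i)"
  proof (rule sum_mono)
    fix i assume i: "i \<in> I"
    have "(\<Sum>j\<in>I. e i j) \<le> (\<Sum>j\<in>I. if j \<in> N i then 1 else 0)"
      by (intro sum_mono) (auto simp: e_def)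
    also have "\<dots> = real (card (N i))"
      using NI[OF i] fin by (simp add: sum.If_cases Int_absorb1 Int_commute)
    finally have "(\<Sum>j\<in>I. e i j) * b i \<le> real (card (N i)) * b i"
      by (intro mult_right_mono b0)
    then show "(\<Sum>j\<in>I. e i j * b i) \<le> real (card (N i)) * b i"
      by (simp add: sum_distrib_right)
  qed
  finally have key: "(\<Sum>i\<in>I. \<Sum>j\<in>I. e i j * ((b i + b j) / 2)) \<le> (\<Sum>i\<in>I. real (card (N i)) * b i)" .
  have "variance (\<lambda>x. \<Sum>i\<in>I. w i * \<theta> i x) \<le> (\<Sum>i\<in>I. \<Sum>j\<in>I. W\<^sup>2 * (e i j * ((b i + b j) / 2)))"
    unfolding var_eq by (intro sum_mono trm)
  also have "\<dots> = W\<^sup>2 * (\<Sum>i\<in>I. \<Sum>j\<in>I. e i j * ((b i + b j) / 2))"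
    by (simp add: sum_distrib_left)
  also have "\<dots> \<le> W\<^sup>2 * (\<Sum>i\<in>I. real (card (N i)) * b i)"
    by (intro mult_left_mono key) simp
  finally show ?thesis by (simp add: b_def)
qed

lemma holder_real:
  fixes f g :: "'a \<Rightarrow> real"
  assumes fm: "f \<in> borel_measurable M" and gm: "g \<in> borel_measurable M"
    and f0: "\<And>x. 0 \<le> f x" and g0: "\<And>x. 0 \<le> g x"
    and ab: "a > 1" "b > 1" "1/a + 1/b = 1"
    and fi: "integrable M (\<lambda>x. f x powr a)" and gi: "integrable M (\<lambda>x. g x powr b)"
  shows "(\<integral>\<^sup>+x. ennreal (f x * g x) \<partial>M)
         \<le> ennreal ((\<integral>x. f x powr a \<partial>M) powr (1/a) * (\<integral>x. g x powr b \<partial>M) powr (1/b))"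
proof -
  define A where "A = (\<integral>x. f x powr a \<partial>M)"
  define B where "B = (\<integral>x. g x powr b \<partial>M)"
  have A0: "0 \<le> A" unfolding A_def by (intro integral_nonneg_AE) auto
  have B0: "0 \<le> B" unfolding B_def by (intro integral_nonneg_AE) auto
  show ?thesis
  proof (cases "A = 0 \<or> B = 0")
    case True
    then have "AE x in M. f x * g x = 0"
    proof
      assume "A = 0"
      then have "AE x in M. f x powr a = 0"
        unfolding A_def using integral_nonneg_eq_0_iff_AE[OF fi] by auto
      then show ?thesis by eventually_elim simp
    next
      assume "B = 0"
      then have "AE x in M. g x powr b = 0"
        unfolding B_def using integral_nonneg_eq_0_iff_AE[OF gi] by auto
      then show ?thesis by eventually_elim simp
    qed
    then have "(\<integral>\<^sup>+x. ennreal (f x * g x) \<partial>M) = (\<integral>\<^sup>+x. 0 \<partial>M)"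
      by (intro nn_integral_cong_AE) auto
    then show ?thesis by simp
  next
    case False
    then have Ap: "A > 0" and Bp: "B > 0" using A0 B0 by auto
    define \<alpha> where "\<alpha> = A powr (1/a)"
    define \<beta> where "\<beta> = B powr (1/b)"
    have \<alpha>p: "\<alpha> > 0" and \<beta>p: "\<beta> > 0" using Ap Bp by (auto simp: \<alpha>_def \<beta>_def)
    have \<alpha>a: "\<alpha> powr a = A" using Ap ab by (simp add: \<alpha>_def powr_powr)
    have \<beta>b: "\<beta> powr b = B" using Bp ab by (simp add: \<beta>_def powr_powr)
    have pt: "f x * g x \<le> \<alpha> * \<beta> * (f x powr a / (A * a) + g x powr b / (B * b))" for x
    proof -
      have "(f x / \<alpha>) * (g x / \<beta>) \<le> (f x / \<alpha>) powr a / a + (g x / \<beta>) powr b / b"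
        by (rule Youngs_inequality[OF ab]) (use f0 g0 \<alpha>p \<beta>p in auto)
      also have "\<dots> = f x powr a / (A * a) + g x powr b / (B * b)"
        by (simp add: powr_divide f0 g0 \<alpha>a \<beta>b less_imp_le[OF \<alpha>p] less_imp_le[OF \<beta>p])
      finally have "(f x / \<alpha>) * (g x / \<beta>) \<le> f x powr a / (A * a) + g x powr b / (B * b)" .
      then have "\<alpha> * \<beta> * ((f x / \<alpha>) * (g x / \<beta>)) \<le> \<alpha> * \<beta> * (f x powr a / (A * a) + g x powr b / (B * b))"
        using \<alpha>p \<beta>p by (intro mult_left_mono) auto
      then show ?thesis using \<alpha>p \<beta>p by (simp add: field_simps)
    qed
    have hi: "integrable M (\<lambda>x. \<alpha> * \<beta> * (f x powr a / (A * a) + g x powr b / (B * b)))"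
      using fi gi by auto
    have "(\<integral>\<^sup>+x. ennreal (f x * g x) \<partial>M)
        \<le> (\<integral>\<^sup>+x. ennreal (\<alpha> * \<beta> * (f x powr a / (A * a) + g x powr b / (B * b))) \<partial>M)"
      by (intro nn_integral_mono) (simp add: pt ennreal_leI)
    also have "\<dots> = ennreal (\<integral>x. \<alpha> * \<beta> * (f x powr a / (A * a) + g x powr b / (B * b)) \<partial>M)"
      using \<alpha>p \<beta>p Ap Bp ab f0 g0
      by (intro nn_integral_eq_integral hi AE_I2) (auto intro!: mult_nonneg_nonneg add_nonneg_nonneg divide_nonneg_nonneg)
    also have "(\<integral>x. \<alpha> * \<beta> * (f x powr a / (A * a) + g x powr b / (B * b)) \<partial>M)
        = \<alpha> * \<beta> * (A / (A * a) + B / (B * b))"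
      using fi gi by (simp add: A_def B_def)
    also have "\<dots> = \<alpha> * \<beta>" using Ap Bp ab by (simp add: field_simps)
    finally show ?thesis by (simp add: \<alpha>_def \<beta>_def A_def B_def)
  qed
qed

lemma Lp2_sq:
  "(Lp_norm M 2 u)\<^sup>2 = (\<integral>\<^sup>+x. ennreal ((u x)\<^sup>2) \<partial>M)"
proof -
  have eq: "(\<integral>\<^sup>+x. ennreal (\<bar>u x\<bar> powr 2) \<partial>M) = (\<integral>\<^sup>+x. ennreal ((u x)\<^sup>2) \<partial>M)"
    by simp
  have t: "(2::ennreal) \<noteq> \<infinity>" by simp
  have e2: "enn2real (2::ennreal) = 2"
    by (metis enn2real_ennreal ennreal_numeral zero_le_numeral)
  show ?thesis
  proof (cases "(\<integral>\<^sup>+x. ennreal ((u x)\<^sup>2) \<partial>M) = \<infinity>")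
    case True
    then show ?thesis unfolding Lp_norm_def Let_def using t eq by (simp add: e2 top_power_ennreal)
  next
    case False
    then obtain r where r: "(\<integral>\<^sup>+x. ennreal ((u x)\<^sup>2) \<partial>M) = ennreal r" "0 \<le> r"
      by (cases "(\<integral>\<^sup>+x. ennreal ((u x)\<^sup>2) \<partial>M)") auto
    have "(ennreal (r powr (1/2)))\<^sup>2 = ennreal r"
      using r(2) by (simp add: ennreal_power powr_half_sqrt)
    then show ?thesis unfolding Lp_norm_def Let_def using t eq r by (simp add: e2)
  qed
qed

lemma Linf_AE: "AE x in M. ennreal \<bar>u x\<bar> \<le> Lp_norm M \<infinity> u"
  unfolding Lp_norm_def by (simp add: esssup_AE)

lemma holder_inf:
  assumes ym: "y \<in> borel_measurable M" and pm: "\<psi> \<in> borel_measurable M"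
  shows "(\<integral>\<^sup>+x. ennreal ((y x * \<psi> x)\<^sup>2) \<partial>M) \<le> (Lp_norm M \<infinity> y)\<^sup>2 * (Lp_norm M 2 \<psi>)\<^sup>2"
proof -
  define E where "E = Lp_norm M \<infinity> y"
  have "(\<integral>\<^sup>+x. ennreal ((y x * \<psi> x)\<^sup>2) \<partial>M) = (\<integral>\<^sup>+x. (ennreal \<bar>y x\<bar>)\<^sup>2 * ennreal ((\<psi> x)\<^sup>2) \<partial>M)"
    by (intro nn_integral_cong) (simp add: ennreal_power ennreal_mult[symmetric] power_mult_distrib)
  also have "\<dots> \<le> (\<integral>\<^sup>+x. E\<^sup>2 * ennreal ((\<psi> x)\<^sup>2) \<partial>M)"
  proof (intro nn_integral_mono_AE)
    show "AE x in M. (ennreal \<bar>y x\<bar>)\<^sup>2 * ennreal ((\<psi> x)\<^sup>2) \<le> E\<^sup>2 * ennreal ((\<psi> x)\<^sup>2)"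
      using Linf_AE[where M=M and u=y] unfolding E_def[symmetric]
      by eventually_elim (intro mult_right_mono power_mono, auto)
  qed
  also have "\<dots> = E\<^sup>2 * (\<integral>\<^sup>+x. ennreal ((\<psi> x)\<^sup>2) \<partial>M)"
    using pm by (intro nn_integral_cmult) measurable
  finally show ?thesis by (simp add: E_def Lp2_sq)
qed

lemma Lp_zero_fin:
  assumes um: "u \<in> borel_measurable M" and p: "1 \<le> p"
    and z: "Lp_norm M (ennreal p) u = 0"
  shows "AE x in M. u x = 0"
proof -
  define I where "I = (\<integral>\<^sup>+ x. ennreal (\<bar>u x\<bar> powr p) \<partial>M)"
  have pt: "ennreal p \<noteq> \<infinity>" by simp
  have "I \<noteq> \<infinity>" and "enn2real I powr (1 / p) = 0"
    using z p unfolding Lp_norm_def Let_def I_def[symmetric]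
    by (auto split: if_splits simp: ennreal_eq_0_iff I_def)
  then have "I = 0" by (auto simp: enn2real_eq_0_iff)
  then have "AE x in M. ennreal (\<bar>u x\<bar> powr p) = 0"
    unfolding I_def using um by (subst nn_integral_0_iff_AE[symmetric]) (measurable, simp)
  then show ?thesis by eventually_elim (simp add: ennreal_eq_0_iff)
qed

lemma Lp_zero_inf:
  assumes z: "Lp_norm M \<infinity> u = 0"
  shows "AE x in M. u x = 0"
  using Linf_AE[where M=M and u=u] unfolding z by eventually_elim simp

lemma sq_powr: "((x::real)\<^sup>2) powr (p/2) = \<bar>x\<bar> powr p"
proof -
  have h: "(x::real)\<^sup>2 = \<bar>x\<bar> powr 2" by simp
  have "(x\<^sup>2) powr (p/2) = (\<bar>x\<bar> powr 2) powr (p/2)" by (subst h) (rule refl)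
  also have "\<dots> = \<bar>x\<bar> powr p" by (simp only: powr_powr) simp
  finally show ?thesis .
qed

lemma powr_sq: "((r::real) powr a)\<^sup>2 = r powr (2 * a)"
  by (simp add: power2_eq_square powr_add[symmetric])

lemma Lp_fin_unfold:
  assumes "0 \<le> p" "(\<integral>\<^sup>+ x. ennreal (\<bar>u x\<bar> powr p) \<partial>M) = ennreal R" "0 \<le> R"
  shows "Lp_norm M (ennreal p) u = ennreal (R powr (1/p))"
  using assms unfolding Lp_norm_def Let_def by simp

lemma Lp_inf_unfold:
  assumes "0 \<le> p" "(\<integral>\<^sup>+ x. ennreal (\<bar>u x\<bar> powr p) \<partial>M) = \<infinity>"
  shows "Lp_norm M (ennreal p) u = \<infinity>"
  using assms unfolding Lp_norm_def Let_def by simp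

lemma holder_fin:
  assumes ym: "y \<in> borel_measurable M" and pm: "\<psi> \<in> borel_measurable M"
    and pq: "2 < p" "2 < q" "1/p + 1/q = 1/2"
  shows "(\<integral>\<^sup>+x. ennreal ((y x * \<psi> x)\<^sup>2) \<partial>M)
         \<le> (Lp_norm M (ennreal p) y)\<^sup>2 * (Lp_norm M (ennreal q) \<psi>)\<^sup>2"
proof (cases "Lp_norm M (ennreal p) y = 0 \<or> Lp_norm M (ennreal q) \<psi> = 0")
  case True
  then have "AE x in M. y x * \<psi> x = 0"
  proof
    assume "Lp_norm M (ennreal p) y = 0"
    then have "AE x in M. y x = 0" using Lp_zero_fin[OF ym, of p] pq by simp
    then show ?thesis by eventually_elim auto
  next
    assume "Lp_norm M (ennreal q) \<psi> = 0"
    then have "AE x in M. \<psi> x = 0" using Lp_zero_fin[OF pm, of q] pq by simp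
    then show ?thesis by eventually_elim auto
  qed
  then have "(\<integral>\<^sup>+x. ennreal ((y x * \<psi> x)\<^sup>2) \<partial>M) = (\<integral>\<^sup>+x. 0 \<partial>M)"
    by (intro nn_integral_cong_AE) auto
  then show ?thesis by simp
next
  case False
  then have nz: "Lp_norm M (ennreal p) y \<noteq> 0" "Lp_norm M (ennreal q) \<psi> \<noteq> 0" by auto
  define Iy where "Iy = (\<integral>\<^sup>+ x. ennreal (\<bar>y x\<bar> powr p) \<partial>M)"
  define Ip where "Ip = (\<integral>\<^sup>+ x. ennreal (\<bar>\<psi> x\<bar> powr q) \<partial>M)"
  show ?thesis
  proof (cases "Iy = \<infinity> \<or> Ip = \<infinity>")
    case True
    then have "Lp_norm M (ennreal p) y = \<infinity> \<or> Lp_norm M (ennreal q) \<psi> = \<infinity>"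
      using Lp_inf_unfold[where p=p and u=y and M=M] Lp_inf_unfold[where p=q and u=\<psi> and M=M] pq Iy_def Ip_def by auto
    then have "(Lp_norm M (ennreal p) y)\<^sup>2 * (Lp_norm M (ennreal q) \<psi>)\<^sup>2 = \<infinity>"
      using nz by (auto simp: top_power_ennreal power_eq_0_iff)
    then show ?thesis by simp
  next
    case False
    define Ry where "Ry = enn2real Iy"
    define Rp where "Rp = enn2real Ip"
    have R: "Iy = ennreal Ry" "0 \<le> Ry" "Ip = ennreal Rp" "0 \<le> Rp"
      using False by (auto simp: Ry_def Rp_def less_top)
    have Ly: "Lp_norm M (ennreal p) y = ennreal (Ry powr (1/p))"
      using Lp_fin_unfold[where p=p and u=y and M=M and R=Ry] R pq Iy_def by auto
    have Lp: "Lp_norm M (ennreal q) \<psi> = ennreal (Rp powr (1/q))"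
      using Lp_fin_unfold[where p=q and u=\<psi> and M=M and R=Rp] R pq Ip_def by auto
    have iy: "integrable M (\<lambda>x. \<bar>y x\<bar> powr p)"
      by (rule integrableI_nn_integral_finite[where x=Ry]) (use ym R Iy_def in auto)
    have ip: "integrable M (\<lambda>x. \<bar>\<psi> x\<bar> powr q)"
      by (rule integrableI_nn_integral_finite[where x=Rp]) (use pm R Ip_def in auto)
    have Ryi: "Ry = (\<integral>x. \<bar>y x\<bar> powr p \<partial>M)"
    proof -
      have "ennreal Ry = ennreal (\<integral>x. \<bar>y x\<bar> powr p \<partial>M)"
        using R Iy_def nn_integral_eq_integral[OF iy] by auto
      then show ?thesis using R by (simp add: integral_nonneg_AE)
    qed
    have Rpi: "Rp = (\<integral>x. \<bar>\<psi> x\<bar> powr q \<partial>M)"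
    proof -
      have "ennreal Rp = ennreal (\<integral>x. \<bar>\<psi> x\<bar> powr q \<partial>M)"
        using R Ip_def nn_integral_eq_integral[OF ip] by auto
      then show ?thesis using R by (simp add: integral_nonneg_AE)
    qed
    have ab: "p/2 > 1" "q/2 > 1" "1/(p/2) + 1/(q/2) = 1" using pq by (auto simp: field_simps)
    have H: "(\<integral>\<^sup>+x. ennreal ((y x)\<^sup>2 * (\<psi> x)\<^sup>2) \<partial>M)
         \<le> ennreal ((\<integral>x. ((y x)\<^sup>2) powr (p/2) \<partial>M) powr (1/(p/2)) * (\<integral>x. ((\<psi> x)\<^sup>2) powr (q/2) \<partial>M) powr (1/(q/2)))"
      by (rule holder_real[OF _ _ _ _ ab]) (use ym pm iy ip in \<open>auto simp: sq_powr\<close>)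
    have "(\<integral>\<^sup>+x. ennreal ((y x * \<psi> x)\<^sup>2) \<partial>M) = (\<integral>\<^sup>+x. ennreal ((y x)\<^sup>2 * (\<psi> x)\<^sup>2) \<partial>M)"
      by (simp add: power_mult_distrib)
    also have "\<dots> \<le> ennreal (Ry powr (2/p) * Rp powr (2/q))"
      using H by (simp add: sq_powr Ryi Rpi)
    also have "\<dots> = (Lp_norm M (ennreal p) y)\<^sup>2 * (Lp_norm M (ennreal q) \<psi>)\<^sup>2"
      unfolding Ly Lp using R by (simp add: ennreal_power ennreal_mult powr_sq)
    finally show ?thesis .
  qed
qed

lemma inv_enn: "0 < r \<Longrightarrow> 1 / ennreal r = ennreal (1/r)"
  using divide_ennreal[of 1 r] by simp

lemma half_enn: "1 / (2::ennreal) = ennreal (1/2)"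
  using inv_enn[of 2] by simp

lemma exps:
  assumes p: "1 \<le> p" and q: "1 \<le> q" and pq: "1/p + 1/q = 1/(2::ennreal)"
  shows "(p = \<infinity> \<and> q = 2) \<or> (p = 2 \<and> q = \<infinity>) \<or>
         (\<exists>p' q'. p = ennreal p' \<and> q = ennreal q' \<and> 2 < p' \<and> 2 < q' \<and> 1/p' + 1/q' = 1/2)"
proof (cases p)
  case (real p')
  with p have p1: "1 \<le> p'" by (metis ennreal_1 ennreal_le_iff2 zero_le_one not_one_le_zero)
  show ?thesis
  proof (cases q)
    case (real q')
    with q have q1: "1 \<le> q'" by (metis ennreal_1 ennreal_le_iff2 zero_le_one not_one_le_zero)
    have "ennreal (1/p' + 1/q') = ennreal (1/2)"
      using pq real \<open>p = ennreal p'\<close> p1 q1 by (simp add: inv_enn half_enn ennreal_plus[symmetric] del: ennreal_plus)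
    then have e: "1/p' + 1/q' = 1/2" using p1 q1 by (subst (asm) ennreal_inj) auto
    have "2 < p'"
    proof -
      have "0 < 1/q'" using q1 by simp
      then have "1/p' < 1/2" using e by linarith
      then show ?thesis using p1 by (simp add: field_simps)
    qed
    moreover have "2 < q'"
    proof -
      have "0 < 1/p'" using p1 by simp
      then have "1/q' < 1/2" using e by linarith
      then show ?thesis using q1 by (simp add: field_simps)
    qed
    ultimately show ?thesis using e real \<open>p = ennreal p'\<close> by blast
  next
    case top
    then have "ennreal (1/p') = ennreal (1/2)" using pq \<open>p = ennreal p'\<close> p1 by (simp add: inv_enn half_enn)
    then have "1/p' = 1/2" using p1 by (subst (asm) ennreal_inj) auto
    then have "p' = 2" by (simp add: field_simps)
    then show ?thesis using top \<open>p = ennreal p'\<close> by simp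
  qed
next
  case top
  show ?thesis
  proof (cases q)
    case (real q')
    with q have q1: "1 \<le> q'" by (metis ennreal_1 ennreal_le_iff2 zero_le_one not_one_le_zero)
    then have "ennreal (1/q') = ennreal (1/2)" using pq real top by (simp add: inv_enn half_enn)
    then have "1/q' = 1/2" using q1 by (subst (asm) ennreal_inj) auto
    then have "q' = 2" by (simp add: field_simps)
    then show ?thesis using top real by simp
  next
    case top2: top
    then show ?thesis using pq top by (simp add: half_enn)
  qed
qed

lemma holder_sq:
  assumes ym: "y \<in> borel_measurable M" and pm: "\<psi> \<in> borel_measurable M"
    and p: "1 \<le> p" and q: "1 \<le> q" and pq: "1/p + 1/q = 1/(2::ennreal)"
  shows "(\<integral>\<^sup>+x. ennreal ((y x * \<psi> x)\<^sup>2) \<partial>M) \<le> (Lp_norm M p y)\<^sup>2 * (Lp_norm M q \<psi>)\<^sup>2"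
  using exps[OF p q pq]
proof (elim disjE exE conjE)
  assume "p = \<infinity>" "q = 2"
  then show ?thesis using holder_inf[OF ym pm] by simp
next
  assume "p = 2" "q = \<infinity>"
  then show ?thesis using holder_inf[OF pm ym] by (simp add: mult.commute)
next
  fix p' q' assume "p = ennreal p'" "q = ennreal q'" "2 < p'" "2 < q'" "1/p' + 1/q' = 1/2"
  then show ?thesis using holder_fin[OF ym pm] by simp
qed

lemma inf_step:
  fixes f :: "'b \<Rightarrow> ennreal"
  assumes S: "S \<noteq> {}" and k: "0 \<le> k"
    and H: "\<And>s. s \<in> S \<Longrightarrow> ennreal V \<le> ennreal k * (f s)\<^sup>2"
  shows "ennreal V \<le> ennreal k * (INF s\<in>S. f s)\<^sup>2"
proof (cases "V \<le> 0")
  case True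
  then have "ennreal V = 0" by (simp add: ennreal_eq_0_iff)
  then show ?thesis by simp
next
  case False
  then have V: "V > 0" by simp
  from S obtain s0 where s0: "s0 \<in> S" by blast
  have kp: "k > 0"
  proof (rule ccontr)
    assume "\<not> k > 0"
    then have "k = 0" using k by simp
    then have "ennreal V \<le> 0" using H[OF s0] by simp
    then show False using V by (simp add: ennreal_eq_0_iff)
  qed
  define r where "r = ennreal (sqrt (V / k))"
  have rle: "r \<le> f s" if s: "s \<in> S" for s
  proof (rule ccontr)
    assume "\<not> r \<le> f s"
    then have lt: "f s < r" by simp
    then have "f s \<noteq> \<top>" unfolding r_def using top.not_eq_extremum by fastforce
    then obtain t where t: "f s = ennreal t" "0 \<le> t" by (cases "f s") auto
    have "t < sqrt (V / k)" using lt t unfolding r_def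
      by (metis ennreal_less_iff ennreal_less_zero_iff not_less order.strict_trans1 real_sqrt_ge_zero V kp less_imp_le divide_nonneg_nonneg)
    then have "t\<^sup>2 < (sqrt (V / k))\<^sup>2" using t by (intro power_strict_mono) auto
    also have "\<dots> = V / k" using V kp by simp
    finally have "k * t\<^sup>2 < V" using kp by (simp add: field_simps)
    moreover have "ennreal V \<le> ennreal (k * t\<^sup>2)"
      using H[OF s] t k by (simp add: ennreal_power ennreal_mult)
    ultimately show False using V by (simp add: ennreal_le_iff2) 
  qed
  have "ennreal V = ennreal k * r\<^sup>2"
    using V kp by (simp add: r_def ennreal_power ennreal_mult[symmetric])
  also have "\<dots> \<le> ennreal k * (INF s\<in>S. f s)\<^sup>2"
    by (intro mult_left_mono power_mono INF_greatest rle) auto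
  finally show ?thesis .
qed

theorem proposition4:
  fixes MZ :: "'z measure" and MW :: "'w measure"
    and y :: "nat \<Rightarrow> 'z \<times> 'w \<Rightarrow> real" and \<psi> :: "nat \<Rightarrow> 'z \<times> 'w \<Rightarrow> real"
    and Msp :: "nat \<Rightarrow> ('z \<times> 'w \<Rightarrow> real) set" and \<theta> :: "nat \<Rightarrow> ('z \<times> 'w \<Rightarrow> real) \<Rightarrow> real"
    and \<nu> :: "nat \<Rightarrow> nat \<Rightarrow> real" and \<nu>bar :: real and n :: nat
  assumes "prob_space MZ" and "prob_space MW"
    and "\<And>i. i \<ge> 1 \<Longrightarrow> closed_L2_subspace (MZ \<Otimes>\<^sub>M MW) (Msp i)"
    and "\<And>i. i \<ge> 1 \<Longrightarrow> y i \<in> Msp i"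
    and "\<And>i. i \<ge> 1 \<Longrightarrow> \<psi> i \<in> Msp i"
    and "\<And>i u. i \<ge> 1 \<Longrightarrow> u \<in> Msp i \<Longrightarrow>
           \<theta> i u = (\<integral>x. u x * \<psi> i x \<partial>(MZ \<Otimes>\<^sub>M MW))"
    and "\<nu>bar > 0"
    and "\<And>m i. 1 \<le> i \<Longrightarrow> i \<le> m \<Longrightarrow> 0 \<le> \<nu> m i \<and> real m * \<nu> m i \<le> \<nu>bar"
  shows
    "(\<forall>p q. 1 \<le> p \<and> 1 \<le> q \<and> 1 / p + 1 / q = 1 / (2::ennreal) \<longrightarrow>
        ennreal (prob_space.variance (MZ \<Otimes>\<^sub>M MW)
                   (\<lambda>x. \<Sum>i\<in>{1..n}. \<nu> n i * (y i x * \<psi> i x)))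
        \<le> ennreal (\<nu>bar\<^sup>2 / (real n)\<^sup>2) *
          (\<Sum>i\<in>{1..n}. of_nat (card (dep_nbhd (MZ \<Otimes>\<^sub>M MW) y \<psi> n i)) *
              (Lp_norm (MZ \<Otimes>\<^sub>M MW) p (y i))\<^sup>2 * (Lp_norm (MZ \<Otimes>\<^sub>M MW) q (\<psi> i))\<^sup>2))
     \<and>
     ennreal (prob_space.variance (MZ \<Otimes>\<^sub>M MW)
                (\<lambda>x. \<Sum>i\<in>{1..n}. \<nu> n i * (y i x * \<psi> i x)))
     \<le> ennreal (\<nu>bar\<^sup>2 *
           ((\<Sum>i\<in>{1..n}. real (card (dep_nbhd (MZ \<Otimes>\<^sub>M MW) y \<psi> n i))) / real n) / real n) *
       (INF pq\<in>{(p, q). 1 \<le> p \<and> 1 \<le> q \<and> 1 / p + 1 / q = 1 / (2::ennreal)}.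
           (MAX i\<in>{1..n}. Lp_norm (MZ \<Otimes>\<^sub>M MW) (fst pq) (y i)) *
           (MAX i\<in>{1..n}. Lp_norm (MZ \<Otimes>\<^sub>M MW) (snd pq) (\<psi> i)))\<^sup>2"
proof -
  let ?M = "MZ \<Otimes>\<^sub>M MW"
  have P: "prob_space ?M" by (rule prob_space_pair) fact+
  interpret prob_space ?M by (rule P)
  note cl = assms(3) and yM = assms(4) and pM = assms(5) and nu = assms(8)
  have yL2: "y i \<in> L2_funs ?M" if "i \<ge> 1" for i
    using cl[OF that] yM[OF that] unfolding closed_L2_subspace_def by blast
  have pL2: "\<psi> i \<in> L2_funs ?M" if "i \<ge> 1" for i
    using cl[OF that] pM[OF that] unfolding closed_L2_subspace_def by blast
  have ym: "y i \<in> borel_measurable ?M" if "i \<ge> 1" for i using yL2[OF that] by (simp add: L2_funs_def)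
  have pm: "\<psi> i \<in> borel_measurable ?M" if "i \<ge> 1" for i using pL2[OF that] by (simp add: L2_funs_def)
  have y2: "integrable ?M (\<lambda>x. (y i x)\<^sup>2)" if "i \<ge> 1" for i using yL2[OF that] by (simp add: L2_funs_def)
  have p2: "integrable ?M (\<lambda>x. (\<psi> i x)\<^sup>2)" if "i \<ge> 1" for i using pL2[OF that] by (simp add: L2_funs_def)
  have th1: "integrable ?M (\<lambda>x. y i x * \<psi> i x)" if "i \<ge> 1" for i
  proof (rule Bochner_Integration.integrable_bound)
    show "integrable ?M (\<lambda>x. (y i x)\<^sup>2 + (\<psi> i x)\<^sup>2)" using y2[OF that] p2[OF that] by auto
    show "(\<lambda>x. y i x * \<psi> i x) \<in> borel_measurable ?M" using ym[OF that] pm[OF that] by auto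
    show "AE x in ?M. norm (y i x * \<psi> i x) \<le> norm ((y i x)\<^sup>2 + (\<psi> i x)\<^sup>2)"
      by (intro AE_I2) (simp add: abs_mult_le_sq)
  qed
  define N where "N i = dep_nbhd ?M y \<psi> n i" for i
  define V where "V = variance (\<lambda>x. \<Sum>i\<in>{1..n}. \<nu> n i * (y i x * \<psi> i x))"
  define T where "T i = (\<integral>\<^sup>+x. ennreal ((y i x * \<psi> i x)\<^sup>2) \<partial>?M)" for i
  define c where "c = \<nu>bar\<^sup>2 / (real n)\<^sup>2"
  show ?thesis
  proof (cases "n = 0")
    case True
    then show ?thesis by simp
  next
    case False
    then have n1: "n \<ge> 1" by simp
    have NI: "N i \<subseteq> {1..n}" if "i \<in> {1..n}" for i
      unfolding N_def using that by (intro nbhd_sub P ym pm) auto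
    have star: "ennreal V \<le> ennreal c * (\<Sum>i\<in>{1..n}. of_nat (card (N i)) * T i)"
    proof (cases "\<forall>i\<in>{1..n}. integrable ?M (\<lambda>x. (y i x * \<psi> i x)\<^sup>2)")
      case True
      have cb: "variance (\<lambda>x. \<Sum>i\<in>{1..n}. \<nu> n i * (\<lambda>i x. y i x * \<psi> i x) i x)
         \<le> (\<nu>bar / real n)\<^sup>2 * (\<Sum>i\<in>{1..n}. real (card (N i)) * expectation (\<lambda>x. ((\<lambda>i x. y i x * \<psi> i x) i x)\<^sup>2))"
      proof (rule core_bound)
        show "finite {1..n}" by simp
        fix i assume i: "i \<in> {1..n}"
        show "(\<lambda>i x. y i x * \<psi> i x) i \<in> borel_measurable ?M" using ym pm i by auto
        show "integrable ?M (\<lambda>x. ((\<lambda>i x. y i x * \<psi> i x) i x)\<^sup>2)" using True i by auto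
        show "integrable ?M ((\<lambda>i x. y i x * \<psi> i x) i)" using th1 i by auto
        show "N i \<subseteq> {1..n}" using NI[OF i] .
        show "0 \<le> \<nu> n i \<and> \<nu> n i \<le> \<nu>bar / real n"
          using nu[of i n] i n1 by (auto simp: field_simps)
      next
        fix i j assume i: "i \<in> {1..n}" and j: "j \<in> {1..n}" and nj: "j \<notin> N i"
        have "indep_var borel (\<lambda>x. y i x * \<psi> i x) borel (\<lambda>x. y j x * \<psi> j x)"
          by (rule indep_from_nbhd[OF P i j nj[unfolded N_def]]) (use ym pm in auto)
        then show "expectation (\<lambda>x. (\<lambda>i x. y i x * \<psi> i x) i x * (\<lambda>i x. y i x * \<psi> i x) j x)
            = expectation ((\<lambda>i x. y i x * \<psi> i x) i) * expectation ((\<lambda>i x. y i x * \<psi> i x) j)"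
          using indep_var_lebesgue_integral th1 i j by auto
      qed
      have s0: "0 \<le> real (card (N i)) * expectation (\<lambda>x. (y i x * \<psi> i x)\<^sup>2)" for i
        by (intro mult_nonneg_nonneg integral_nonneg_AE) auto
      have Te: "T i = ennreal (expectation (\<lambda>x. (y i x * \<psi> i x)\<^sup>2))" if "i \<in> {1..n}" for i
        unfolding T_def using True that by (intro nn_integral_eq_integral) auto
      have "ennreal V \<le> ennreal ((\<nu>bar / real n)\<^sup>2 * (\<Sum>i\<in>{1..n}. real (card (N i)) * expectation (\<lambda>x. (y i x * \<psi> i x)\<^sup>2)))"
        using cb unfolding V_def by (intro ennreal_leI) simp
      also have "\<dots> = ennreal (c * (\<Sum>i\<in>{1..n}. real (card (N i)) * expectation (\<lambda>x. (y i x * \<psi> i x)\<^sup>2)))"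
        by (simp add: c_def power_divide)
      also have "\<dots> = ennreal c * ennreal (\<Sum>i\<in>{1..n}. real (card (N i)) * expectation (\<lambda>x. (y i x * \<psi> i x)\<^sup>2))"
        by (rule ennreal_mult) (simp_all add: c_def s0 sum_nonneg)
      also have "\<dots> = ennreal c * (\<Sum>i\<in>{1..n}. ennreal (real (card (N i)) * expectation (\<lambda>x. (y i x * \<psi> i x)\<^sup>2)))"
        by (simp add: s0)
      also have "\<dots> = ennreal c * (\<Sum>i\<in>{1..n}. of_nat (card (N i)) * T i)"
        by (intro arg_cong2[where f="(*)"] refl sum.cong)
           (simp add: Te ennreal_mult ennreal_of_nat_eq_real_of_nat)
      finally show ?thesis .
    next
      case False
      then obtain k where k: "k \<in> {1..n}" "\<not> integrable ?M (\<lambda>x. (y k x * \<psi> k x)\<^sup>2)" by blast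
      have Tk: "T k = \<top>"
      proof (rule ccontr)
        assume "T k \<noteq> \<top>"
        then have "integrable ?M (\<lambda>x. (y k x * \<psi> k x)\<^sup>2)"
          using k ym pm unfolding T_def
          by (intro integrableI_nn_integral_finite[where x="enn2real (T k)"]) (auto simp: T_def less_top)
        then show False using k by simp
      qed
      have kN: "k \<in> N k"
      proof (rule ccontr)
        assume "k \<notin> N k"
        then have "indep_var borel (\<lambda>x. y k x * \<psi> k x) borel (\<lambda>x. y k x * \<psi> k x)"
          by (intro indep_from_nbhd[OF P k(1) k(1)]) (use ym pm in \<open>auto simp: N_def\<close>)
        then have "integrable ?M (\<lambda>x. (y k x * \<psi> k x) * (y k x * \<psi> k x))"
          using indep_var_integrable th1 k by auto
        then show False using k by (simp add: power2_eq_square)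
      qed
      have "card (N k) \<noteq> 0" using kN NI[OF k(1)] by (auto simp: finite_subset)
      then have "of_nat (card (N k)) * T k = (\<top>::ennreal)" using Tk by simp
      moreover have "of_nat (card (N k)) * T k \<le> (\<Sum>i\<in>{1..n}. of_nat (card (N i)) * T i)"
        using k by (intro member_le_sum) auto
      ultimately have st: "(\<Sum>i\<in>{1..n}. of_nat (card (N i)) * T i) = \<top>" by (simp add: top_unique)
      have "c > 0" using n1 assms(7) by (simp add: c_def)
      then have "ennreal c * (\<Sum>i\<in>{1..n}. of_nat (card (N i)) * T i) = \<top>"
        by (simp only: st ennreal_mult_top) (simp add: ennreal_eq_0_iff)
      then show ?thesis by simp
    qed
    have hold: "T i \<le> (Lp_norm ?M p (y i))\<^sup>2 * (Lp_norm ?M q (\<psi> i))\<^sup>2"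
      if "i \<in> {1..n}" "1 \<le> p" "1 \<le> q" "1 / p + 1 / q = 1 / (2::ennreal)" for i p q
      unfolding T_def using that by (intro holder_sq ym pm) auto
    have part1: "ennreal V \<le> ennreal c * (\<Sum>i\<in>{1..n}. of_nat (card (N i)) *
              (Lp_norm ?M p (y i))\<^sup>2 * (Lp_norm ?M q (\<psi> i))\<^sup>2)"
      if "1 \<le> p" "1 \<le> q" "1 / p + 1 / q = 1 / (2::ennreal)" for p q
    proof -
      have "(\<Sum>i\<in>{1..n}. of_nat (card (N i)) * T i)
          \<le> (\<Sum>i\<in>{1..n}. of_nat (card (N i)) * (Lp_norm ?M p (y i))\<^sup>2 * (Lp_norm ?M q (\<psi> i))\<^sup>2)"
        unfolding mult.assoc using hold that by (intro sum_mono mult_left_mono) auto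
      then show ?thesis using star by (meson mult_left_mono order_trans zero_le)
    qed
    define S2 where "S2 = {(p, q). 1 \<le> p \<and> 1 \<le> q \<and> 1 / p + 1 / q = 1 / (2::ennreal)}"
    define f where "f pq = (MAX i\<in>{1..n}. Lp_norm ?M (fst pq) (y i)) * (MAX i\<in>{1..n}. Lp_norm ?M (snd pq) (\<psi> i))" for pq
    define K where "K = \<nu>bar\<^sup>2 * ((\<Sum>i\<in>{1..n}. real (card (N i))) / real n) / real n"
    have K0: "0 \<le> K" unfolding K_def by (intro mult_nonneg_nonneg divide_nonneg_nonneg sum_nonneg) auto
    have part2: "ennreal V \<le> ennreal K * (f pq)\<^sup>2" if pq: "pq \<in> S2" for pq
    proof -
      obtain p q where pqe: "pq = (p, q)" by (cases pq)
      have pq': "1 \<le> p" "1 \<le> q" "1 / p + 1 / q = 1 / (2::ennreal)" using pq pqe S2_def by auto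
      have my: "Lp_norm ?M p (y i) \<le> (MAX i\<in>{1..n}. Lp_norm ?M p (y i))" if "i \<in> {1..n}" for i
        using that by (intro Max_ge) auto
      have mp: "Lp_norm ?M q (\<psi> i) \<le> (MAX i\<in>{1..n}. Lp_norm ?M q (\<psi> i))" if "i \<in> {1..n}" for i
        using that by (intro Max_ge) auto
      have "(\<Sum>i\<in>{1..n}. of_nat (card (N i)) * (Lp_norm ?M p (y i))\<^sup>2 * (Lp_norm ?M q (\<psi> i))\<^sup>2)
          \<le> (\<Sum>i\<in>{1..n}. of_nat (card (N i)) * (f pq)\<^sup>2)"
        unfolding mult.assoc f_def pqe fst_conv snd_conv power_mult_distrib
        using my mp by (intro sum_mono mult_left_mono mult_mono power_mono) auto
      also have "\<dots> = of_nat (\<Sum>i\<in>{1..n}. card (N i)) * (f pq)\<^sup>2"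
        by (simp add: sum_distrib_right)
      finally have "ennreal V \<le> ennreal c * (of_nat (\<Sum>i\<in>{1..n}. card (N i)) * (f pq)\<^sup>2)"
        using part1[OF pq'] by (meson mult_left_mono order_trans zero_le)
      also have "ennreal c * (of_nat (\<Sum>i\<in>{1..n}. card (N i)) * (f pq)\<^sup>2) = ennreal K * (f pq)\<^sup>2"
      proof -
        have "ennreal c * of_nat (\<Sum>i\<in>{1..n}. card (N i)) = ennreal (c * (\<Sum>i\<in>{1..n}. real (card (N i))))"
        proof -
          have "ennreal c * of_nat (\<Sum>i\<in>{1..n}. card (N i)) = ennreal c * ennreal (\<Sum>i\<in>{1..n}. real (card (N i)))"
            by (simp add: ennreal_of_nat_eq_real_of_nat)
          also have "\<dots> = ennreal (c * (\<Sum>i\<in>{1..n}. real (card (N i))))"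
            by (rule ennreal_mult[symmetric]) (simp_all add: c_def sum_nonneg)
          finally show ?thesis .
        qed
        also have "c * (\<Sum>i\<in>{1..n}. real (card (N i))) = K"
          unfolding c_def K_def by (simp add: field_simps power2_eq_square)
        finally have e: "ennreal c * of_nat (\<Sum>i\<in>{1..n}. card (N i)) = ennreal K" .
        show ?thesis by (simp only: mult.assoc[symmetric] e)
      qed
      finally show ?thesis .
    qed
    have S2ne: "S2 \<noteq> {}"
    proof -
      have "(2, \<top>) \<in> S2" unfolding S2_def by (simp add: one_le_numeral)
      then show ?thesis by blast
    qed
    have "ennreal V \<le> ennreal K * (INF pq\<in>S2. f pq)\<^sup>2"
      by (rule inf_step[OF S2ne K0 part2])
    then show ?thesis
      using part1 unfolding V_def K_def S2_def f_def N_def c_def by auto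
  qed
qed

end
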